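(* Let $P$ be a set of $n$ points in $\mathbb{R}^2$ in general position, and consider any convex hull peeling process on $P$, i.e. any sequence of steps each deleting one vertex of the convex hull of the current point set. Then the total number of times any point becomes active for any hull point (over the initial configuration and all steps of the process) is at most $3n$.
   Context: For the current point set $S$, $L^1$ is the set of vertices of $CH(S)$ and $L^2$ the set of vertices of $CH(S\setminus L^1)$. For consecutive points $(t,u,v)$ of $L^1$, a point $p$ is active for $u$ (equivalently, active in $u$'s triangle $\triangle(t,u,v)$) if, upon deleting $u$ from $S$ and recomputing the first and second convex layers, $p$ moves to the first layer. A point $p$ becomes active for $u$ at a given configuration if it is active for $u$ there but was not active for $u$ in the previous configuration (or if this is the initial configuration). *)

theory Defs
  imports "HOL-Analysis.Analysis"
begin

type_synonym pt = "real \<times> real"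

definition general_position :: "pt set \<Rightarrow> bool" where
  "general_position P \<longleftrightarrow>
     (\<forall>a\<in>P. \<forall>b\<in>P. \<forall>c\<in>P. a \<noteq> b \<and> a \<noteq> c \<and> b \<noteq> c \<longrightarrow> \<not> collinear {a, b, c})"

definition layer1 :: "pt set \<Rightarrow> pt set" where
  "layer1 S = {p \<in> S. p \<notin> convex hull (S - {p})}"

definition layer2 :: "pt set \<Rightarrow> pt set" where
  "layer2 S = layer1 (S - layer1 S)"

definition active :: "pt set \<Rightarrow> pt \<Rightarrow> pt \<Rightarrow> bool" where
  "active S u p \<longleftrightarrow> u \<in> layer1 S \<and> p \<in> S - {u} \<and> p \<notin> layer1 S \<and> p \<in> layer1 (S - {u})"

definition peeling_process :: "pt set \<Rightarrow> (nat \<Rightarrow> pt set) \<Rightarrow> nat \<Rightarrow> bool" where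
  "peeling_process P S m \<longleftrightarrow> S 0 = P \<and>
     (\<forall>i<m. \<exists>u\<in>layer1 (S i). S (Suc i) = S i - {u})"

definition activation_events :: "(nat \<Rightarrow> pt set) \<Rightarrow> nat \<Rightarrow> (nat \<times> pt \<times> pt) set" where
  "activation_events S m = {(i, u, p). i \<le> m \<and> active (S i) u p \<and>
      (i = 0 \<or> \<not> active (S (i - 1)) u p)}"

end

theory Submission
  imports Defs
begin

lemma layer1_mono:
  assumes "p \<in> layer1 A" "p \<in> B" "B \<subseteq> A"
  shows "p \<in> layer1 B"
proof -
  have "convex hull (B - {p}) \<subseteq> convex hull (A - {p})"
    using assms(3) by (intro hull_mono) blast
  then show ?thesis using assms unfolding layer1_def by blast
qed

lemma layer1_sub: "layer1 A \<subseteq> A"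
  unfolding layer1_def by blast

lemma pp_step:
  assumes "peeling_process P S m" "i < m"
  obtains w where "w \<in> layer1 (S i)" "S (Suc i) = S i - {w}"
  using assms unfolding peeling_process_def by blast

lemma pp_dec:
  assumes "peeling_process P S m" "i \<le> j" "j \<le> m"
  shows "S j \<subseteq> S i"
  using assms(2,3)
proof (induction j rule: dec_induct)
  case base then show ?case by simp
next
  case (step j)
  then have "j < m" by simp
  then obtain w where "S (Suc j) = S j - {w}" using pp_step[OF assms(1)] by metis
  then show ?case using step by auto
qed

lemma pp_sub:
  assumes "peeling_process P S m" "j \<le> m"
  shows "S j \<subseteq> P"
  using pp_dec[OF assms(1) _ assms(2), of 0] assms(1) unfolding peeling_process_def by auto

lemma inv:
  assumes pp: "peeling_process P S m" and act: "active (S i) u p"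
    and "i \<le> j" "j \<le> m"
  shows "active (S j) u p \<or> p \<notin> S j \<or> p \<in> layer1 (S j)"
  using assms(3,4)
proof (induction j rule: dec_induct)
  case base then show ?case using act by simp
next
  case (step j)
  then have "j < m" by simp
  then obtain w where w: "w \<in> layer1 (S j)" "S (Suc j) = S j - {w}"
    using pp_step[OF pp] by metis
  have IH: "active (S j) u p \<or> p \<notin> S j \<or> p \<in> layer1 (S j)" using step by simp
  show ?case
  proof (cases "p \<in> S (Suc j)")
    case False then show ?thesis by simp
  next
    case pin: True
    show ?thesis
    proof (cases "p \<in> layer1 (S j)")
      case True
      then show ?thesis using layer1_mono[OF True pin] w by auto
    next
      case pnl: False
      have pj: "p \<in> S j" using pin w by auto
      with IH pnl have a: "active (S j) u p" by simp
      show ?thesis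
      proof (cases "w = u")
        case True
        then have "p \<in> layer1 (S (Suc j))" using a w unfolding active_def by simp
        then show ?thesis by simp
      next
        case False
        have ul: "u \<in> layer1 (S j)" and pl: "p \<in> layer1 (S j - {u})" and pu: "p \<noteq> u"
          using a unfolding active_def by auto
        have "u \<in> S j" using ul layer1_sub by blast
        then have "u \<in> S (Suc j)" using w(2) False by blast
        moreover have "S (Suc j) \<subseteq> S j" using w(2) by blast
        ultimately have "u \<in> layer1 (S (Suc j))" using layer1_mono[OF ul] by blast
        moreover have "p \<in> S (Suc j) - {u}" using pin pu by blast
        moreover have "p \<in> layer1 (S (Suc j) - {u})"
        proof (rule layer1_mono[OF pl])
          show "p \<in> S (Suc j) - {u}" using pin pu by blast
          show "S (Suc j) - {u} \<subseteq> S j - {u}" using w(2) by blast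
        qed
        ultimately show ?thesis unfolding active_def by auto
      qed
    qed
  qed
qed

lemma active_persist:
  assumes pp: "peeling_process P S m" and act: "active (S i) u p"
    and "i \<le> j" "j \<le> m" "p \<in> S j" "p \<notin> layer1 (S j)"
  shows "active (S j) u p"
  using inv[OF pp act assms(3,4)] assms(5,6) by simp

lemma active_bound:
  "card {u. active S u p} \<le> 3"
proof (cases "\<exists>u. active S u p")
  case False then have "{u. active S u p} = {}" by blast
  then show ?thesis by (simp only: card.empty)
next
  case True
  then obtain u0 where a0: "active S u0 p" by blast
  then have "p \<in> convex hull (S - {p})" unfolding active_def layer1_def by auto
  then obtain B where B: "finite B" "B \<subseteq> S - {p}" "card B \<le> DIM(pt) + 1" "p \<in> convex hull B"
    unfolding caratheodory[of "S - {p}"] by blast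
  have "{u. active S u p} \<subseteq> B"
  proof
    fix u assume "u \<in> {u. active S u p}"
    then have a: "active S u p" by simp
    show "u \<in> B"
    proof (rule ccontr)
      assume "u \<notin> B"
      then have "B \<subseteq> S - {u} - {p}" using B by auto
      then have "p \<in> convex hull (S - {u} - {p})" using B(4) hull_mono by blast
      then show False using a unfolding active_def layer1_def by auto
    qed
  qed
  then have "card {u. active S u p} \<le> card B" using B(1) card_mono by blast
  then show ?thesis using B(3) by simp
qed

theorem theorem2:
  fixes P :: "pt set" and n m :: nat and S :: "nat \<Rightarrow> pt set"
  assumes "finite P" and "card P = n" and "general_position P"
    and "peeling_process P S m"
  shows "card (activation_events S m) \<le> 3 * n"
proof -
  define E where "E = activation_events S m"
  have Ei: "x \<in> E \<longleftrightarrow> (\<exists>i u p. x = (i,u,p) \<and> i \<le> m \<and> active (S i) u p \<and>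
      (i = 0 \<or> \<not> active (S (i - 1)) u p))" for x
    unfolding E_def activation_events_def by auto
  have Ed: "(i,u,p) \<in> E \<Longrightarrow> i \<le> m \<and> active (S i) u p" for i u p
    unfolding E_def activation_events_def by simp
  define U where "U p = {u. \<exists>i. (i,u,p) \<in> E}" for p
  define f where "f = (\<lambda>(i::nat,u::pt,p::pt). (u,p))"
  have inj: "inj_on f E"
  proof (rule inj_onI)
    fix x y assume x: "x \<in> E" and y: "y \<in> E" and fxy: "f x = f y"
    obtain i u p where xi: "x = (i,u,p)" "i \<le> m" "active (S i) u p" "i = 0 \<or> \<not> active (S (i - 1)) u p"
      using x Ei by blast
    obtain i' u' p' where yi: "y = (i',u',p')" "i' \<le> m" "active (S i') u' p'" "i' = 0 \<or> \<not> active (S (i' - 1)) u' p'"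
      using y Ei by blast
    have eq: "u' = u" "p' = p" using fxy xi yi unfolding f_def by auto
    have no: False if "k < k'" "k' \<le> m" "active (S k) u p" "active (S k') u p"
       "\<not> active (S (k' - 1)) u p" for k k'
    proof -
      have sub: "S k' \<subseteq> S (k' - 1)" using pp_dec[OF assms(4), of "k' - 1" k'] that by auto
      have pk: "p \<in> S k'" "p \<notin> layer1 (S k')" using that(4) unfolding active_def by auto
      have "p \<notin> layer1 (S (k' - 1))" using layer1_mono[of p "S (k' - 1)" "S k'"] sub pk by blast
      moreover have "k \<le> k' - 1" "k' - 1 \<le> m" "p \<in> S (k' - 1)" using that sub pk by auto
      ultimately have "active (S (k' - 1)) u p"
        using active_persist[OF assms(4) that(3), of "k' - 1"] by blast
      then show False using that(5) by simp
    qed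
    have "i = i'"
    proof (rule ccontr)
      assume "i \<noteq> i'"
      then consider "i < i'" | "i' < i" by linarith
      then show False
      proof cases
        case 1 then show False using no[of i i'] xi yi eq by auto
      next
        case 2 then show False using no[of i' i] xi yi eq by auto
      qed
    qed
    then show "x = y" using xi yi eq by simp
  qed
  have UP: "U p \<subseteq> P" for p
  proof
    fix u assume "u \<in> U p"
    then obtain i where "(i,u,p) \<in> E" unfolding U_def by blast
    then have "i \<le> m" "active (S i) u p" using Ed by blast+
    then show "u \<in> P" using pp_sub[OF assms(4)] layer1_sub unfolding active_def by blast
  qed
  have Ucard: "card (U p) \<le> 3" for p
  proof (cases "U p = {}")
    case True then show ?thesis by simp
  next
    case False
    define K where "K = {i. \<exists>u. (i,u,p) \<in> E}"
    have "K \<subseteq> {..m}" unfolding K_def using Ed by blast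
    then have Kfin: "finite K" using finite_subset by blast
    have Kne: "K \<noteq> {}" using False unfolding K_def U_def by auto
    define k where "k = Max K"
    have "k \<in> K" unfolding k_def using Kfin Kne by simp
    then obtain uk where "(k,uk,p) \<in> E" unfolding K_def by blast
    then have km: "k \<le> m" and ak: "active (S k) uk p" using Ed by blast+
    have "U p \<subseteq> {u. active (S k) u p}"
    proof
      fix u assume "u \<in> U p"
      then obtain i where e: "(i,u,p) \<in> E" unfolding U_def by blast
      then have "i \<in> K" unfolding K_def by blast
      then have "i \<le> k" unfolding k_def using Kfin by simp
      moreover have "active (S i) u p" using e Ed by blast
      ultimately show "u \<in> {u. active (S k) u p}"
        using active_persist[OF assms(4), of i u p k] km ak unfolding active_def by auto
    qed
    moreover have "finite {u. active (S k) u p}"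
    proof (rule finite_subset[OF _ assms(1)])
      show "{u. active (S k) u p} \<subseteq> P"
      proof
        fix u assume "u \<in> {u. active (S k) u p}"
        then have "u \<in> S k" using layer1_sub unfolding active_def by blast
        then show "u \<in> P" using pp_sub[OF assms(4) km] by blast
      qed
    qed
    ultimately have "card (U p) \<le> card {u. active (S k) u p}" by (rule card_mono[rotated])
    then show ?thesis using active_bound[of "S k" p] by simp
  qed
  have fE: "f ` E \<subseteq> (\<Union>p\<in>P. (\<lambda>u. (u,p)) ` U p)"
  proof
    fix y assume "y \<in> f ` E"
    then obtain i u p where e: "(i,u,p) \<in> E" "y = (u,p)" unfolding f_def by auto
    then have "i \<le> m" "active (S i) u p" using Ed by blast+
    then have "p \<in> P" using pp_sub[OF assms(4)] unfolding active_def by blast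
    then show "y \<in> (\<Union>p\<in>P. (\<lambda>u. (u,p)) ` U p)" using e unfolding U_def by blast
  qed
  have fin: "finite (\<Union>p\<in>P. (\<lambda>u. (u,p)) ` U p)"
  proof (rule finite_UN_I)
    show "finite P" by (rule assms(1))
    fix p assume "p \<in> P"
    show "finite ((\<lambda>u. (u,p)) ` U p)" using finite_subset[OF UP[of p] assms(1)] by simp
  qed
  have "card E = card (f ` E)" using inj by (simp add: card_image)
  also have "\<dots> \<le> card (\<Union>p\<in>P. (\<lambda>u. (u,p)) ` U p)" using fE fin card_mono by blast
  also have "\<dots> \<le> (\<Sum>p\<in>P. card ((\<lambda>u. (u,p)) ` U p))" using assms(1) card_UN_le by blast
  also have "\<dots> \<le> (\<Sum>p\<in>P. 3)"
  proof (intro sum_mono)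
    fix p assume "p \<in> P"
    have "card ((\<lambda>u. (u,p)) ` U p) \<le> card (U p)"
      using finite_subset[OF UP[of p] assms(1)] by (rule card_image_le)
    then show "card ((\<lambda>u. (u,p)) ` U p) \<le> 3" using Ucard[of p] by linarith
  qed
  also have "\<dots> = 3 * n" using assms(2) by simp
  finally show ?thesis unfolding E_def .
qed

end
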